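(* Let $p\ge5$ and consider the white metallic tree $\mathcal W_\pi$ under the penultimate assignment. Let $\nu$ be any node, let $u$ be its metallic code and let $w$ be the metallic code of $\nu-1$ (the empty word if $\nu=1$). Then: (i) if $\nu$ is black, the signature of $\nu$ is $0$, and its $p-3$ sons, in increasing order, have metallic codes $w\,(h+1)$ for $h=1,\dots,p-5$ (the code $w$ followed by the digit $h+1$), then $u\,0$, then $u\,1$; (ii) if $\nu$ is white, the signature of $\nu$ is nonzero, and its $p-2$ sons, in increasing order, have metallic codes $w\,(h+1)$ for $h=1,\dots,p-4$, then $u\,0$, then $u\,1$. In particular, in both cases the black son $u\,0$ has signature $0$ and the sons other than $u0,u1$ have signatures $2,3,\dots$ in increasing order.
   Context: Fix $p\ge5$. Metallic numbers: $m_{-1}=0$, $m_0=1$, $m_{n+2}=(p-2)m_{n+1}-m_n$. With $d=p-3$, $c=p-4$, the metallic code of a positive integer $n$ is the unique word $a_k\cdots a_0$ over $\{0,\dots,p-3\}$ with $a_k\ne0$, $n=\sum a_im_i$, containing no factor $d\,c^j\,d$ ($j\ge0$); the code of $0$ is the empty word; the signature of $n$ is its last digit $a_0$; $w\,e$ denotes the word $w$ followed by the digit $e$. White metallic tree under an assignment $\alpha$, $\mathcal W_\alpha$: its nodes are the positive integers, each black or white; the root $1$ is white; nodes are processed in increasing order, and node $\nu$ receives $p-2$ sons if white and $p-3$ sons if black, these sons being the smallest integers not yet used, in increasing order; the assignment specifies for each node the position (among its sons, the leftmost having position $1$) of its unique black son, all other sons being white. The penultimate assignment $\pi$ puts the black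 son at the penultimate position (position $p-3$ for a white node, $p-4$ for a black node). *)

theory Defs
  imports Main
begin

(* Metallic numbers m_n for n >= 0 (m_{-1} = 0 is folded into m_1 = p - 2). *)
fun metallic :: "nat \<Rightarrow> nat \<Rightarrow> int" where
  "metallic p 0 = 1"
| "metallic p (Suc 0) = int p - 2"
| "metallic p (Suc (Suc n)) = (int p - 2) * metallic p (Suc n) - metallic p n"

(* A word a_k ... a_0 is the list [a_k, ..., a_0]; its last element is a_0. *)
definition word_val :: "nat \<Rightarrow> nat list \<Rightarrow> int" where
  "word_val p xs = (\<Sum>i<length xs. int (rev xs ! i) * metallic p i)"

definition is_metallic_code :: "nat \<Rightarrow> nat \<Rightarrow> nat list \<Rightarrow> bool" where
  "is_metallic_code p n xs \<longleftrightarrow>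
     set xs \<subseteq> {0..p-3} \<and> (xs = [] \<or> hd xs \<noteq> 0) \<and> word_val p xs = int n \<and>
     \<not> (\<exists>a b j. xs = a @ [p-3] @ replicate j (p-4) @ [p-3] @ b)"

definition metallic_code :: "nat \<Rightarrow> nat \<Rightarrow> nat list" where
  "metallic_code p n = (THE xs. is_metallic_code p n xs)"

definition signature :: "nat \<Rightarrow> nat \<Rightarrow> nat" where
  "signature p n = last (metallic_code p n)"

(* Assignment: node \<Rightarrow> (node is white) \<Rightarrow> position (1-based) of its black son. *)
type_synonym assignment = "nat \<Rightarrow> bool \<Rightarrow> nat"

(* tree_colors p \<alpha> k: colours (True = white) of nodes 1, 2, ..., listed in order,
   after nodes 1..k have been processed; list index i corresponds to node i+1. *)
fun tree_colors :: "nat \<Rightarrow> assignment \<Rightarrow> nat \<Rightarrow> bool list" where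
  "tree_colors p \<alpha> 0 = [True]"
| "tree_colors p \<alpha> (Suc k) =
     (let L = tree_colors p \<alpha> k; wh = L ! k;
          ns = (if wh then p - 2 else p - 3); pos = \<alpha> (Suc k) wh
      in L @ map (\<lambda>i. i \<noteq> pos) [1..<ns+1])"

definition is_white :: "nat \<Rightarrow> assignment \<Rightarrow> nat \<Rightarrow> bool" where
  "is_white p \<alpha> \<nu> = tree_colors p \<alpha> \<nu> ! (\<nu> - 1)"

definition sons :: "nat \<Rightarrow> assignment \<Rightarrow> nat \<Rightarrow> nat list" where
  "sons p \<alpha> \<nu> = [length (tree_colors p \<alpha> (\<nu> - 1)) + 1 ..< length (tree_colors p \<alpha> \<nu>) + 1]"

definition penultimate :: "nat \<Rightarrow> assignment" where
  "penultimate p = (\<lambda>\<nu> wh. if wh then p - 3 else p - 4)"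

end

theory Submission
  imports Defs
begin

fun vs :: "nat \<Rightarrow> nat \<Rightarrow> nat list \<Rightarrow> int" where
  "vs p k [] = 0"
| "vs p k (a # r) = int a * metallic p k + vs p (Suc k) r"

lemma vs_sum: "vs p k r = (\<Sum>i<length r. int (r ! i) * metallic p (i + k))"
  proof (induction r arbitrary: k)
  case Nil then show ?case by simp
next
  case (Cons a r)
  show ?case by (simp only: length_Cons sum.lessThan_Suc_shift) (simp add: Cons.IH)
qed

lemma word_val_vs: "word_val p xs = vs p 0 (rev xs)"
  by (simp add: word_val_def vs_sum)

lemma vs_append: "vs p k (r @ s) = vs p k r + vs p (k + length r) s"
  by (induction r arbitrary: k) simp_all

lemma vs_rep0: "vs p k (replicate j 0) = 0"
  by (induction j arbitrary: k) simp_all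

definition nopat :: "nat \<Rightarrow> nat list \<Rightarrow> bool" where
  "nopat p xs \<longleftrightarrow> \<not> (\<exists>a b j. xs = a @ [p-3] @ replicate j (p-4) @ [p-3] @ b)"

definition dpre :: "nat \<Rightarrow> nat list \<Rightarrow> bool" where
  "dpre p t \<longleftrightarrow> (\<exists>j r. t = replicate j (p-4) @ (p-3) # r)"

definition ends_dc :: "nat \<Rightarrow> nat list \<Rightarrow> bool" where
  "ends_dc p xs \<longleftrightarrow> (\<exists>a j. xs = a @ [p-3] @ replicate j (p-4))"

definition okw :: "nat \<Rightarrow> nat list \<Rightarrow> bool" where
  "okw p xs \<longleftrightarrow> set xs \<subseteq> {0..p-3} \<and> nopat p xs"

definition pm :: "nat \<Rightarrow> nat \<Rightarrow> int" where
  "pm p k = (if k = 0 then 0 else metallic p (k - 1))"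

lemma code_iff: "is_metallic_code p n xs \<longleftrightarrow> okw p xs \<and> (xs = [] \<or> hd xs \<noteq> 0) \<and> word_val p xs = int n"
  unfolding is_metallic_code_def okw_def nopat_def by auto

lemma nopat_Cons: "nopat p (a # t) \<Longrightarrow> nopat p t"
  unfolding nopat_def by (metis append_Cons)

lemma nopat_Cons_d: "nopat p ((p-3) # t) \<Longrightarrow> \<not> dpre p t"
  unfolding nopat_def dpre_def by (metis append_Cons append_Nil)

lemma dpre_Cons_c: "\<not> dpre p ((p-4) # t) \<Longrightarrow> \<not> dpre p t"
  unfolding dpre_def by (metis append_Cons replicate_Suc)

lemma dpre_Cons_other: "dpre p (a # t) \<Longrightarrow> a \<noteq> p - 4 \<Longrightarrow> a \<noteq> p - 3 \<Longrightarrow> False"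
  unfolding dpre_def
  apply (elim exE)
  subgoal for j r by (cases j) auto
  done

lemma word_val_Cons: "word_val p (a # t) = int a * metallic p (length t) + word_val p t"
  by (simp add: word_val_vs vs_append)

lemma vs_nonneg_aux: "(\<And>k. metallic p k \<ge> 0) \<Longrightarrow> vs p k r \<ge> 0"
  by (induction r arbitrary: k) simp_all

context
  fixes p :: nat
  assumes p5: "5 \<le> p"
begin

lemma m_rec: "metallic p (Suc k) = int p * metallic p k - 2 * metallic p k - pm p k"
  by (cases k) (simp_all add: pm_def algebra_simps)

lemma m_inc: "1 \<le> metallic p k \<and> metallic p k < metallic p (Suc k)"
proof (induction k)
  case 0 then show ?case using p5 by simp
next
  case (Suc k)
  have r: "metallic p (Suc (Suc k)) = int p * metallic p (Suc k) - 2 * metallic p (Suc k) - metallic p k"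
    using m_rec[of "Suc k"] by (simp add: pm_def)
  have "5 * metallic p (Suc k) \<le> int p * metallic p (Suc k)"
    using p5 Suc by (intro mult_right_mono) auto
  then show ?case using Suc r by linarith
qed

lemma m_pos: "1 \<le> metallic p k" using m_inc by blast

lemma m_mono: "i \<le> j \<Longrightarrow> metallic p i \<le> metallic p j"
  by (rule lift_Suc_mono_le[of "metallic p"]) (use m_inc less_imp_le in auto)

lemma pm_less: "pm p k < metallic p k"
  using m_inc[of "k-1"] m_pos[of k] by (cases k) (auto simp: pm_def)

lemma vs_nonneg: "vs p k r \<ge> 0"
  apply (rule vs_nonneg_aux)
  using m_pos by (meson dual_order.trans zero_le_one)

lemma bound: "okw p xs \<Longrightarrow> word_val p xs < metallic p (length xs) \<and>
   (\<not> dpre p xs \<longrightarrow> word_val p xs + pm p (length xs) < metallic p (length xs))"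
proof (induction xs)
  case Nil then show ?case by (simp add: word_val_def pm_def)
next
  case (Cons a t)
  let ?k = "length t" let ?m = "metallic p ?k"
  have okt: "okw p t" using Cons.prems nopat_Cons unfolding okw_def by auto
  have IH1: "word_val p t < ?m" and IH2: "\<not> dpre p t \<Longrightarrow> word_val p t + pm p ?k < ?m"
    using Cons.IH okt by auto
  have ad: "a \<le> p - 3" using Cons.prems unfolding okw_def by auto
  have val: "word_val p (a # t) = int a * ?m + word_val p t" by (rule word_val_Cons)
  have rec: "metallic p (length (a#t)) = int p * ?m - 2 * ?m - pm p ?k" using m_rec by simp
  have pmS: "pm p (length (a#t)) = ?m" by (simp add: pm_def)
  have pml: "pm p ?k < ?m" by (rule pm_less)
  have mp: "1 \<le> ?m" by (rule m_pos)
  consider "a < p - 4" | "a = p - 4" | "a = p - 3" using ad by linarith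
  then show ?case
  proof cases
    case 1
    have "int a * ?m \<le> (int p - 5) * ?m" using 1 p5 mp by (intro mult_right_mono) auto
    then have "int a * ?m \<le> int p * ?m - 5 * ?m" by (simp add: algebra_simps)
    then have A: "word_val p (a # t) + pm p (length (a # t)) < metallic p (length (a # t))"
      using val rec pmS pml IH1 by linarith
    moreover have "word_val p (a # t) < metallic p (length (a # t))" using A pmS mp by linarith
    ultimately show ?thesis by blast
  next
    case 2
    have e: "int a * ?m = int p * ?m - 4 * ?m" using 2 p5 by (simp add: algebra_simps of_nat_diff)
    show ?thesis
    proof (intro conjI impI)
      show "word_val p (a # t) < metallic p (length (a # t))"
        using val rec e pml IH1 by linarith
    next
      assume "\<not> dpre p (a # t)"
      then have "\<not> dpre p t" using 2 dpre_Cons_c by blast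
      then show "word_val p (a # t) + pm p (length (a # t)) < metallic p (length (a # t))"
        using val rec e pmS IH2 by linarith
    qed
  next
    case 3
    have e: "int a * ?m = int p * ?m - 3 * ?m" using 3 p5 by (simp add: algebra_simps of_nat_diff)
    have "nopat p ((p-3) # t)" using Cons.prems 3 unfolding okw_def by simp
    then have "\<not> dpre p t" by (rule nopat_Cons_d)
    moreover have "dpre p (a # t)" using 3 unfolding dpre_def by (metis append_Nil replicate_0)
    ultimately show ?thesis using val rec e IH2 by auto
  qed
qed

lemma same_len: "okw p s \<Longrightarrow> okw p t \<Longrightarrow> length s = length t \<Longrightarrow> word_val p s = word_val p t \<Longrightarrow> s = t"
proof (induction s arbitrary: t)
  case Nil then show ?case by simp
next
  case (Cons a s')
  then obtain b t' where t: "t = b # t'" by (cases t) auto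
  have oks: "okw p s'" and okt: "okw p t'" using Cons.prems t nopat_Cons unfolding okw_def by auto
  have len: "length s' = length t'" using Cons.prems t by simp
  let ?m = "metallic p (length s')"
  have b1: "word_val p s' < ?m" using bound[OF oks] by blast
  have b2: "word_val p t' < ?m" using bound[OF okt] len by auto
  have n1: "word_val p s' \<ge> 0" "word_val p t' \<ge> 0" by (simp_all add: word_val_vs vs_nonneg)
  have v1: "word_val p (a # s') = int a * ?m + word_val p s'" by (rule word_val_Cons)
  have v2: "word_val p t = int b * ?m + word_val p t'" using t len word_val_Cons by simp
  have ab: "a = b"
  proof (rule ccontr)
    assume "a \<noteq> b"
    then consider "a < b" | "b < a" by linarith
    then show False
    proof cases
      case 1
      have "(int a + 1) * ?m \<le> int b * ?m" using 1 m_pos[of "length s'"] by (intro mult_right_mono) auto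
      then show False using v1 v2 b1 n1 Cons.prems(4) by (simp add: algebra_simps)
    next
      case 2
      have "(int b + 1) * ?m \<le> int a * ?m" using 2 m_pos[of "length s'"] by (intro mult_right_mono) auto
      then show False using v1 v2 b2 n1 Cons.prems(4) by (simp add: algebra_simps)
    qed
  qed
  then have "word_val p s' = word_val p t'" using v1 v2 Cons.prems(4) by simp
  then have "s' = t'" using Cons.IH oks okt len by blast
  then show ?case using ab t by simp
qed

lemma val_lower: "okw p (b # t) \<Longrightarrow> b \<noteq> 0 \<Longrightarrow> metallic p (length t) \<le> word_val p (b # t)"
proof -
  assume "b \<noteq> 0"
  have "1 * metallic p (length t) \<le> int b * metallic p (length t)"
    using \<open>b \<noteq> 0\<close> m_pos[of "length t"] by (intro mult_right_mono) auto
  moreover have "word_val p t \<ge> 0" by (simp add: word_val_vs vs_nonneg)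
  ultimately show ?thesis by (simp add: word_val_Cons)
qed

lemma len_le: "is_metallic_code p n xs \<Longrightarrow> is_metallic_code p n ys \<Longrightarrow> length xs \<le> length ys"
proof (rule ccontr)
  assume a: "is_metallic_code p n xs" "is_metallic_code p n ys" "\<not> length xs \<le> length ys"
  then obtain b t where xs: "xs = b # t" by (cases xs) auto
  have b: "b \<noteq> 0" "okw p xs" using a xs by (auto simp: code_iff)
  have "metallic p (length t) \<le> word_val p xs" using val_lower b xs by simp
  moreover have "metallic p (length ys) \<le> metallic p (length t)" using a xs by (intro m_mono) simp
  moreover have "okw p ys" using a(2) by (simp add: code_iff)
  then have "word_val p ys < metallic p (length ys)" using bound by blast
  moreover have "word_val p xs = word_val p ys" using a by (simp add: code_iff)
  ultimately show False by linarith
qed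

lemma code_uniq: "is_metallic_code p n xs \<Longrightarrow> is_metallic_code p n ys \<Longrightarrow> xs = ys"
proof -
  assume a: "is_metallic_code p n xs" "is_metallic_code p n ys"
  have "length xs = length ys" using len_le[OF a] len_le[OF a(2) a(1)] by simp
  moreover have "okw p xs" "okw p ys" "word_val p xs = word_val p ys" using a by (auto simp: code_iff)
  ultimately show ?thesis using same_len by blast
qed

lemma code_eq: "is_metallic_code p n xs \<Longrightarrow> metallic_code p n = xs"
  unfolding metallic_code_def by (rule the_equality) (auto intro: code_uniq)

end

lemma nopat_snoc: "nopat p (xs @ [e]) \<longleftrightarrow> nopat p xs \<and> (e = p-3 \<longrightarrow> \<not> ends_dc p xs)"
  unfolding nopat_def ends_dc_def
proof
  assume H: "\<not> (\<exists>a b j. xs @ [e] = a @ [p-3] @ replicate j (p-4) @ [p-3] @ b)"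
  show "\<not> (\<exists>a b j. xs = a @ [p-3] @ replicate j (p-4) @ [p-3] @ b) \<and>
        (e = p-3 \<longrightarrow> \<not> (\<exists>a j. xs = a @ [p-3] @ replicate j (p-4)))"
  proof (intro conjI impI notI)
    assume "\<exists>a b j. xs = a @ [p-3] @ replicate j (p-4) @ [p-3] @ b"
    then obtain a b j where "xs = a @ [p-3] @ replicate j (p-4) @ [p-3] @ b" by blast
    then have "xs @ [e] = a @ [p-3] @ replicate j (p-4) @ [p-3] @ (b @ [e])" by simp
    with H show False by blast
  next
    assume "e = p-3" "\<exists>a j. xs = a @ [p-3] @ replicate j (p-4)"
    then obtain a j where "xs = a @ [p-3] @ replicate j (p-4)" by blast
    then have "xs @ [e] = a @ [p-3] @ replicate j (p-4) @ [p-3] @ []" using \<open>e = p-3\<close> by simp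
    with H show False by blast
  qed
next
  assume H: "\<not> (\<exists>a b j. xs = a @ [p-3] @ replicate j (p-4) @ [p-3] @ b) \<and>
        (e = p-3 \<longrightarrow> \<not> (\<exists>a j. xs = a @ [p-3] @ replicate j (p-4)))"
  show "\<not> (\<exists>a b j. xs @ [e] = a @ [p-3] @ replicate j (p-4) @ [p-3] @ b)"
  proof
    assume "\<exists>a b j. xs @ [e] = a @ [p-3] @ replicate j (p-4) @ [p-3] @ b"
    then obtain a b j where E: "xs @ [e] = a @ [p-3] @ replicate j (p-4) @ [p-3] @ b" by blast
    show False
    proof (cases b rule: rev_cases)
      case Nil
      then have "xs @ [e] = (a @ [p-3] @ replicate j (p-4)) @ [p-3]" using E by simp
      then have "xs = a @ [p-3] @ replicate j (p-4)" "e = p-3" by simp_all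
      with H show False by blast
    next
      case (snoc b' x)
      then have "xs @ [e] = (a @ [p-3] @ replicate j (p-4) @ [p-3] @ b') @ [x]" using E by simp
      then have "xs = a @ [p-3] @ replicate j (p-4) @ [p-3] @ b'" by (simp only: append1_eq_conv)
      with H show False by blast
    qed
  qed
qed

lemma ends_dc_snoc: "p - 4 \<noteq> p - 3 \<Longrightarrow> ends_dc p (xs @ [e]) \<longleftrightarrow> e = p-3 \<or> (e = p-4 \<and> ends_dc p xs)"
  unfolding ends_dc_def
proof (intro iffI)
  assume "\<exists>a j. xs @ [e] = a @ [p-3] @ replicate j (p-4)"
  then obtain a j where E: "xs @ [e] = a @ [p-3] @ replicate j (p-4)" by blast
  show "e = p-3 \<or> (e = p-4 \<and> (\<exists>a j. xs = a @ [p-3] @ replicate j (p-4)))"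
  proof (cases j)
    case 0 then show ?thesis using E by simp
  next
    case (Suc j')
    then have "xs @ [e] = (a @ [p-3] @ replicate j' (p-4)) @ [p-4]" using E
      by (simp add: replicate_append_same[symmetric])
    then have "xs = a @ [p-3] @ replicate j' (p-4)" "e = p-4" by (simp_all only: append1_eq_conv)
    then show ?thesis by blast
  qed
next
  assume "e = p-3 \<or> (e = p-4 \<and> (\<exists>a j. xs = a @ [p-3] @ replicate j (p-4)))"
  then show "\<exists>a j. xs @ [e] = a @ [p-3] @ replicate j (p-4)"
  proof
    assume "e = p-3" then show ?thesis by (intro exI[of _ xs] exI[of _ 0]) simp
  next
    assume "e = p-4 \<and> (\<exists>a j. xs = a @ [p-3] @ replicate j (p-4))"
    then obtain a j where "e = p-4" "xs = a @ [p-3] @ replicate j (p-4)" by blast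
    then show ?thesis by (intro exI[of _ a] exI[of _ "Suc j"]) (simp add: replicate_append_same[symmetric])
  qed
qed

lemma nopat_prefix: "nopat p (xs @ ys) \<Longrightarrow> nopat p xs"
  unfolding nopat_def by (metis append_assoc)

lemma nopat_suffix: "nopat p (xs @ ys) \<Longrightarrow> nopat p ys"
  unfolding nopat_def by (metis append_assoc)

lemma ends_dc_suffix: "ends_dc p ys \<Longrightarrow> ends_dc p (xs @ ys)"
  unfolding ends_dc_def by (metis append_assoc)

lemma nopat_app_rep: "p - 4 \<noteq> p - 3 \<Longrightarrow> nopat p xs \<Longrightarrow> nopat p (xs @ replicate j (p-4))"
proof (induction j)
  case 0 then show ?case by simp
next
  case (Suc j)
  have "xs @ replicate (Suc j) (p-4) = (xs @ replicate j (p-4)) @ [p-4]"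
    by (simp add: replicate_append_same[symmetric])
  then show ?case using Suc nopat_snoc by metis
qed

lemma nopat_Nil: "nopat p []" unfolding nopat_def by simp

lemma dw_rep: "takeWhile (\<lambda>x. x = 0) xs = replicate (length (takeWhile (\<lambda>x. x = 0) xs)) (0::nat)"
  by (metis (mono_tags) replicate_length_same set_takeWhileD)

lemma dw_vs: "vs p k (rev (dropWhile (\<lambda>x. x = 0) xs)) = vs p k (rev xs)"
proof -
  let ?z = "takeWhile (\<lambda>x. x = 0) xs"
  have "xs = replicate (length ?z) 0 @ dropWhile (\<lambda>x. x = 0) xs"
    using dw_rep takeWhile_dropWhile_id by metis
  then have "rev xs = rev (dropWhile (\<lambda>x. x = 0) xs) @ replicate (length ?z) 0"
    by (metis rev_append rev_replicate)
  then show ?thesis by (simp add: vs_append vs_rep0)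
qed

lemma dw_code: "okw p xs \<Longrightarrow> word_val p xs = int n \<Longrightarrow> is_metallic_code p n (dropWhile (\<lambda>x. x = 0) xs)"
proof -
  assume a: "okw p xs" "word_val p xs = int n"
  let ?d = "dropWhile (\<lambda>x. x = 0) xs"
  have h: "?d = [] \<or> hd ?d \<noteq> 0" using hd_dropWhile[of "\<lambda>x. x = 0" xs] by blast
  have s: "set ?d \<subseteq> {0..p-3}" using a(1) set_dropWhileD unfolding okw_def by fastforce
  have np: "nopat p ?d" using a(1) nopat_suffix[of p "takeWhile (\<lambda>x. x = 0) xs" ?d]
    unfolding okw_def by simp
  have v: "word_val p ?d = int n" using a(2) by (simp add: word_val_vs dw_vs)
  show ?thesis using h s np v by (simp add: code_iff okw_def)
qed

lemma ends_dc_dw: "ends_dc p (dropWhile P xs) \<Longrightarrow> ends_dc p xs"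
  by (metis ends_dc_suffix takeWhile_dropWhile_id)

lemma decomp: "\<exists>x\<in>set u. x \<noteq> (0::nat) \<Longrightarrow> \<exists>k b y. b \<noteq> 0 \<and> u = y @ [b] @ replicate k 0"
proof (induction u rule: rev_induct)
  case Nil then show ?case by simp
next
  case (snoc x v)
  show ?case
  proof (cases "x = 0")
    case False then show ?thesis by (intro exI[of _ 0] exI[of _ x] exI[of _ v]) simp
  next
    case True
    then have "\<exists>x\<in>set v. x \<noteq> 0" using snoc.prems by auto
    then obtain k b y where "b \<noteq> 0" "v = y @ [b] @ replicate k 0" using snoc.IH by blast
    then show ?thesis using True
      by (intro exI[of _ "Suc k"] exI[of _ b] exI[of _ y]) (simp add: replicate_append_same[symmetric])
  qed
qed

lemma val_snoc: "word_val p (xs @ [e]) = int e + vs p 1 (rev xs)"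
  by (simp add: word_val_vs)

context
  fixes p :: nat
  assumes p5: "5 \<le> p"
begin

lemma cd: "p - 4 \<noteq> p - 3" using p5 by simp

lemma vs_cd: "vs p s (replicate j (p-4) @ (p-3) # r) =
   metallic p (s+j+1) - metallic p s + pm p s + vs p (s+j+1) r"
proof (induction j arbitrary: s)
  case 0
  have "int (p-3) = int p - 3" using p5 by simp
  then show ?case using m_rec[OF p5, of s] by (simp add: algebra_simps)
next
  case (Suc j)
  have "int (p-4) = int p - 4" using p5 by simp
  then show ?case using Suc.IH[of "Suc s"] m_rec[OF p5, of s] by (simp add: algebra_simps pm_def)
qed


lemma dec:
  assumes uc: "is_metallic_code p n u" and n1: "n \<ge> 1"
  shows "vs p 1 (rev u) - vs p 1 (rev (metallic_code p (n-1))) = (if last u \<noteq> 0 then int p - 2 else int p - 3)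
         \<and> (last u \<noteq> 0 \<longrightarrow> \<not> ends_dc p (metallic_code p (n-1)))"
proof -
  have oku: "okw p u" and hdu: "u = [] \<or> hd u \<noteq> 0" and vu: "word_val p u = int n"
    using uc by (auto simp: code_iff)
  have une: "u \<noteq> []" using vu n1 by (auto simp: word_val_def)
  then obtain x a where u: "u = x @ [a]" by (cases u rule: rev_cases) auto
  have ad: "a \<le> p - 3" using oku u by (auto simp: okw_def)
  have npu: "nopat p (x @ [a])" using oku u by (simp add: okw_def)
  then have npx: "nopat p x" by (simp add: nopat_snoc)
  show ?thesis
  proof (cases "a = 0")
    case False
    define w' where "w' = x @ [a - 1]"
    have ne: "a - 1 \<noteq> p - 3" using False ad p5 by simp
    have okw': "okw p w'" using oku u npx ne by (auto simp: okw_def w'_def nopat_snoc)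
    have "word_val p w' = int (n - 1)" using vu u False n1
      by (simp add: w'_def val_snoc of_nat_diff)
    then have c: "is_metallic_code p (n-1) (dropWhile (\<lambda>x. x = 0) w')" using okw' dw_code by blast
    then have mc: "metallic_code p (n-1) = dropWhile (\<lambda>x. x = 0) w'" using code_eq[OF p5] by blast
    have "vs p 1 (rev u) - vs p 1 (rev w') = int p - 2"
      using False by (simp add: u w'_def of_nat_diff algebra_simps)
    moreover have "\<not> ends_dc p w'"
    proof
      assume "ends_dc p w'"
      then have "a - 1 = p - 4 \<and> ends_dc p x" using ne cd unfolding w'_def by (simp add: ends_dc_snoc)
      then have "a = p - 3" "ends_dc p x" using False p5 by auto
      then show False using npu by (simp add: nopat_snoc)
    qed
    ultimately show ?thesis using False mc u dw_vs ends_dc_dw by (metis last_snoc)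
  next
    case True
    have "\<exists>x\<in>set u. x \<noteq> 0" using une hdu by (cases u) auto
    then obtain k b y where b: "b \<noteq> 0" and u2: "u = y @ [b] @ replicate k 0" using decomp by blast
    have "k \<noteq> 0" using u2 u True b by (cases k) auto
    then obtain j where kj: "k = Suc j" by (cases k) auto
    have bd: "b \<le> p - 3" using oku u2 by (auto simp: okw_def)
    have npb: "nopat p (y @ [b])" using oku u2 nopat_prefix[of p "y @ [b]" "replicate k 0"] by (simp add: okw_def)
    then have npy: "nopat p y" by (simp add: nopat_snoc)
    have ne: "b - 1 \<noteq> p - 3" using b bd p5 by simp
    have np1: "nopat p (y @ [b - 1])" using npy ne by (simp add: nopat_snoc)
    have nend: "\<not> ends_dc p (y @ [b - 1])"
    proof
      assume "ends_dc p (y @ [b - 1])"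
      then have "b - 1 = p - 4 \<and> ends_dc p y" using ne cd by (simp add: ends_dc_snoc)
      then have "b = p - 3" "ends_dc p y" using b p5 by auto
      then show False using npb by (simp add: nopat_snoc)
    qed
    have np2: "nopat p ((y @ [b - 1]) @ [p-3])" using nopat_snoc[of p "y @ [b-1]" "p-3"] np1 nend by blast
    define w' where "w' = y @ [b - 1, p - 3] @ replicate j (p-4)"
    have "nopat p w'" using nopat_app_rep[OF cd np2, of j] by (simp add: w'_def)
    moreover have "set w' \<subseteq> {0..p-3}" using oku u2 by (auto simp: okw_def w'_def)
    ultimately have okw': "okw p w'" by (simp add: okw_def)
    have rw: "rev w' = replicate j (p-4) @ (p-3) # ((b - 1) # rev y)" by (simp add: w'_def)
    have ru: "rev u = replicate (Suc j) 0 @ (b # rev y)" using u2 kj by (simp add: replicate_append_same)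
    have ib: "int (b - Suc 0) = int b - 1" using b by simp
    have m0: "metallic p 0 = 1" "pm p 0 = 0" "pm p 1 = 1" "metallic p 1 = int p - 2" by (simp_all add: pm_def)
    have "word_val p w' = word_val p u - 1"
      unfolding word_val_vs rw ru vs_cd
      by (simp add:  vs_append vs_rep0 ib m0 algebra_simps)
    then have "word_val p w' = int (n - 1)" using vu n1 by simp
    then have c: "is_metallic_code p (n-1) (dropWhile (\<lambda>x. x = 0) w')" using okw' dw_code by blast
    then have mc: "metallic_code p (n-1) = dropWhile (\<lambda>x. x = 0) w'" using code_eq[OF p5] by blast
    have "vs p 1 (rev u) - vs p 1 (rev w') = int p - 3"
      unfolding rw ru vs_cd
      by (simp add: pm_def  vs_append vs_rep0 ib m0 algebra_simps)
    then show ?thesis using True mc u dw_vs by simp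
  qed
qed


definition sg :: "nat \<Rightarrow> nat list \<Rightarrow> nat" where "sg q xs = nat (vs q 1 (rev xs))"
definition nsf :: "nat \<Rightarrow> nat list \<Rightarrow> nat" where "nsf q u = (if last u \<noteq> 0 then q - 2 else q - 3)"
definition son :: "nat \<Rightarrow> nat list \<Rightarrow> nat list \<Rightarrow> nat \<Rightarrow> nat list" where
  "son q u w i = (if i + 2 \<le> nsf q u then w @ [i+1] else if i + 1 = nsf q u then u @ [0] else u @ [1])"
definition TT :: "nat \<Rightarrow> nat \<Rightarrow> nat" where "TT q k = sg q (metallic_code q k) + 1"

lemma nsf_ge: "nsf p u \<ge> 2" "nsf p u \<le> p - 2" using p5 by (auto simp: nsf_def)

lemma sons_ok:
  assumes uc: "is_metallic_code p n u" and wc: "is_metallic_code p (n-1) w" and n1: "n \<ge> 1"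
  shows "sg p u = sg p w + nsf p u"
    and "\<And>i. 1 \<le> i \<Longrightarrow> i \<le> nsf p u \<Longrightarrow> is_metallic_code p (sg p w + 1 + i) (son p u w i)"
proof -
  have mc: "metallic_code p (n-1) = w" using code_eq[OF p5 wc] .
  have D: "vs p 1 (rev u) - vs p 1 (rev w) = int (nsf p u)"
     and E: "last u \<noteq> 0 \<Longrightarrow> \<not> ends_dc p w"
    using dec[OF uc n1] mc p5 by (auto simp: nsf_def split: if_splits)
  have nu: "vs p 1 (rev u) \<ge> 0" "vs p 1 (rev w) \<ge> 0" using vs_nonneg[OF p5] by auto
  show sgu: "sg p u = sg p w + nsf p u" unfolding sg_def using D nu by simp
  have oku: "okw p u" and hdu: "u = [] \<or> hd u \<noteq> 0" and vu: "word_val p u = int n"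
    using uc by (auto simp: code_iff)
  have okw: "okw p w" and hdw: "w = [] \<or> hd w \<noteq> 0"
    using wc by (auto simp: code_iff)
  have une: "u \<noteq> []" using vu n1 by (auto simp: word_val_def)
  have sw: "int (sg p w) = vs p 1 (rev w)" "int (sg p u) = vs p 1 (rev u)" using nu by (simp_all add: sg_def)
  fix i assume i1: "1 \<le> i" and i2: "i \<le> nsf p u"
  have np3: "0 \<noteq> p - 3" "1 \<noteq> p - 3" using p5 by auto
  consider "i + 2 \<le> nsf p u" | "i + 1 = nsf p u" | "i = nsf p u" using i2 by linarith
  then show "is_metallic_code p (sg p w + 1 + i) (son p u w i)"
  proof cases
    case 1
    have so: "son p u w i = w @ [i+1]" using 1 by (simp add: son_def)
    have e: "i + 1 \<le> p - 3" using 1 nsf_ge[of u] by linarith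
    have "i + 1 = p - 3 \<Longrightarrow> last u \<noteq> 0" using 1 p5 by (auto simp: nsf_def split: if_splits)
    then have np: "nopat p (w @ [i+1])" using okw E by (auto simp: okw_def nopat_snoc)
    have "okw p (w @ [i+1])" using np okw e by (auto simp: okw_def)
    moreover have "w @ [i+1] = [] \<or> hd (w @ [i+1]) \<noteq> 0" using hdw by (cases w) auto
    moreover have "word_val p (w @ [i+1]) = int (sg p w + 1 + i)" using sw by (simp add: val_snoc)
    ultimately show ?thesis using so by (simp add: code_iff)
  next
    case 2
    have so: "son p u w i = u @ [0]" using 2 by (simp add: son_def)
    have "okw p (u @ [0])" using oku np3 by (auto simp: okw_def nopat_snoc)
    moreover have "u @ [0] = [] \<or> hd (u @ [0]) \<noteq> 0" using hdu une by (cases u) auto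
    moreover have "word_val p (u @ [0]) = int (sg p w + 1 + i)" using sw sgu 2 by (simp add: val_snoc)
    ultimately show ?thesis using so by (simp add: code_iff)
  next
    case 3
    have so: "son p u w i = u @ [1]" using 3 by (simp add: son_def)
    have "okw p (u @ [1])" using oku np3 p5 by (auto simp: okw_def nopat_snoc)
    moreover have "u @ [1] = [] \<or> hd (u @ [1]) \<noteq> 0" using hdu une by (cases u) auto
    moreover have "word_val p (u @ [1]) = int (sg p w + 1 + i)" using sw sgu 3 by (simp add: val_snoc)
    ultimately show ?thesis using so by (simp add: code_iff)
  qed
qed

lemma code0: "is_metallic_code p 0 []" by (simp add: code_iff okw_def nopat_Nil word_val_def)
lemma code1: "is_metallic_code p 1 [1]"
proof -
  have "1 \<noteq> p - 3" using p5 by simp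
  then have "nopat p ([] @ [1])" using nopat_snoc[of p "[]" 1] nopat_Nil by simp
  then show ?thesis using p5 by (simp add: code_iff okw_def word_val_def)
qed
lemma mc0: "metallic_code p 0 = []" using code_eq[OF p5 code0] .
lemma mc1: "metallic_code p 1 = [1]" using code_eq[OF p5 code1] .

lemma ex_aux: "(\<forall>n \<le> TT p k. is_metallic_code p n (metallic_code p n)) \<and> k < TT p k"
proof (induction k)
  case 0
  have T0: "TT p 0 = 1" by (simp add: TT_def mc0 sg_def)
  have "is_metallic_code p n (metallic_code p n)" if "n \<le> 1" for n
  proof (cases "n = 0")
    case True then show ?thesis using code0 mc0 by simp
  next
    case False then have "n = 1" using that by simp
    then show ?thesis using code1 mc1 by simp
  qed
  then show ?case using T0 by simp
next
  case (Suc k)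
  then have A: "\<And>n. n \<le> TT p k \<Longrightarrow> is_metallic_code p n (metallic_code p n)" and B: "k < TT p k" by auto
  let ?u = "metallic_code p (Suc k)" let ?w = "metallic_code p k"
  have uc: "is_metallic_code p (Suc k) ?u" using A B by simp
  have wc: "is_metallic_code p (Suc k - 1) ?w" using A B by simp
  note so = sons_ok[OF uc wc]
  have TS: "TT p (Suc k) = TT p k + nsf p ?u" using so(1) by (simp add: TT_def)
  have "is_metallic_code p n (metallic_code p n)" if "n \<le> TT p (Suc k)" for n
  proof (cases "n \<le> TT p k")
    case True then show ?thesis using A by blast
  next
    case False
    define i where "i = n - TT p k"
    have i1: "1 \<le> i" and i2: "i \<le> nsf p ?u" and ne: "n = sg p ?w + 1 + i"
      using False that TS by (auto simp: i_def TT_def)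
    have c: "is_metallic_code p n (son p ?u ?w i)" using so(2)[of i] i1 i2 ne by simp
    then have "metallic_code p n = son p ?u ?w i" by (rule code_eq[OF p5])
    then show ?thesis using c by simp
  qed
  moreover have "Suc k < TT p (Suc k)" using TS B nsf_ge[of ?u] by linarith
  ultimately show ?case by blast
qed

lemma code_all: "is_metallic_code p n (metallic_code p n)"
  using ex_aux[of n] by auto

lemma lt_T: "n < TT p n" using ex_aux[of n] by auto

lemma T_step: "n \<ge> 1 \<Longrightarrow> TT p n = TT p (n-1) + nsf p (metallic_code p n)"
  using sons_ok(1)[OF code_all code_all] by (simp add: TT_def)

lemma son_code: "n \<ge> 1 \<Longrightarrow> 1 \<le> i \<Longrightarrow> i \<le> nsf p (metallic_code p n) \<Longrightarrow>
   metallic_code p (TT p (n-1) + i) = son p (metallic_code p n) (metallic_code p (n-1)) i"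
proof -
  assume a: "n \<ge> 1" "1 \<le> i" "i \<le> nsf p (metallic_code p n)"
  have "is_metallic_code p (sg p (metallic_code p (n-1)) + 1 + i) (son p (metallic_code p n) (metallic_code p (n-1)) i)"
    using sons_ok(2)[OF code_all code_all a(1) a(2) a(3)] .
  then have "metallic_code p (sg p (metallic_code p (n-1)) + 1 + i) = son p (metallic_code p n) (metallic_code p (n-1)) i"
    by (rule code_eq[OF p5])
  then show ?thesis by (simp add: TT_def)
qed

lemma son_last: "1 \<le> i \<Longrightarrow> i \<le> nsf p u \<Longrightarrow> (last (son p u w i) \<noteq> 0 \<longleftrightarrow> i \<noteq> nsf p u - 1)"
  using nsf_ge[of u] by (auto simp: son_def)

lemma tree: "tree_colors p (penultimate p) k = map (\<lambda>i. last (metallic_code p i) \<noteq> 0) [1..<TT p k + 1]"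
proof (induction k)
  case 0
  have T0: "TT p 0 = 1" by (simp add: TT_def mc0 sg_def)
  have "metallic_code p (Suc 0) = [1]" using mc1 by simp
  then show ?case by (simp add: T0)
next
  case (Suc k)
  let ?col = "\<lambda>i. last (metallic_code p i) \<noteq> 0"
  let ?u = "metallic_code p (Suc k)" let ?w = "metallic_code p k"
  let ?ns = "nsf p ?u"
  have kT: "k < TT p k" by (rule lt_T)
  have wh: "tree_colors p (penultimate p) k ! k = ?col (Suc k)" using Suc.IH kT by (simp add: nth_upt del: upt_Suc)
  have ns: "(if ?col (Suc k) then p - 2 else p - 3) = ?ns" by (simp add: nsf_def)
  have pos: "penultimate p (Suc k) (?col (Suc k)) = ?ns - 1" by (simp add: nsf_def penultimate_def)
  have TS: "TT p (Suc k) = TT p k + ?ns" using T_step[of "Suc k"] by simp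
  have up: "[1..<TT p (Suc k) + 1] = [1..<TT p k + 1] @ [TT p k + 1..<TT p k + 1 + ?ns]"
    using TS upt_add_eq_append[of 1 "TT p k + 1" ?ns] by (simp add: add_ac)
  have tail: "map (\<lambda>i. i \<noteq> ?ns - 1) [1..<?ns + 1] = map ?col [TT p k + 1..<TT p k + 1 + ?ns]"
  proof (rule nth_equalityI)
    show "length (map (\<lambda>i. i \<noteq> ?ns - 1) [1..<?ns + 1]) = length (map ?col [TT p k + 1..<TT p k + 1 + ?ns])" by simp
  next
    fix i assume "i < length (map (\<lambda>i. i \<noteq> ?ns - 1) [1..<?ns + 1])"
    then have i: "i < ?ns" by (simp del: upt_Suc)
    have "metallic_code p (TT p k + (1 + i)) = son p ?u ?w (1 + i)"
      using son_code[of "Suc k" "1 + i"] i by simp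
    then show "map (\<lambda>i. i \<noteq> ?ns - 1) [1..<?ns + 1] ! i = map ?col [TT p k + 1..<TT p k + 1 + ?ns] ! i"
      using i son_last[of "1 + i" ?u ?w] by (simp add: add.assoc nth_upt del: upt_Suc)
  qed
  have st: "tree_colors p (penultimate p) (Suc k) =
     tree_colors p (penultimate p) k @ map (\<lambda>i. i \<noteq> ?ns - 1) [1..<?ns + 1]"
    by (simp only: tree_colors.simps Let_def wh ns pos)
  have "tree_colors p (penultimate p) (Suc k) =
     map ?col [1..<TT p k + 1] @ map ?col [TT p k + 1..<TT p k + 1 + ?ns]"
    by (subst st, subst Suc.IH, subst tail, rule refl)
  also have "\<dots> = map ?col [1..<TT p (Suc k) + 1]" by (subst up, subst map_append, rule refl)
  finally show ?case .
qed

lemma white: "\<nu> \<ge> 1 \<Longrightarrow> is_white p (penultimate p) \<nu> \<longleftrightarrow> last (metallic_code p \<nu>) \<noteq> 0"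
proof -
  assume a: "\<nu> \<ge> 1"
  have l: "\<nu> - 1 < length [1..<TT p \<nu> + 1]" using lt_T[of \<nu>] by (simp del: upt_Suc)
  have "[1..<TT p \<nu> + 1] ! (\<nu> - 1) = \<nu>" by (subst nth_upt) (use lt_T[of \<nu>] a in auto)
  then show ?thesis unfolding is_white_def tree nth_map[OF l] by simp
qed

lemma len_tree: "length (tree_colors p (penultimate p) k) = TT p k" by (simp add: tree)

end

theorem lemma5:
  fixes p \<nu> :: nat
  assumes "p \<ge> 5" and "\<nu> \<ge> 1"
  defines "u \<equiv> metallic_code p \<nu>" and "w \<equiv> metallic_code p (\<nu> - 1)"
      and "S \<equiv> sons p (penultimate p) \<nu>"
  shows "(\<not> is_white p (penultimate p) \<nu> \<longrightarrow>
            signature p \<nu> = 0 \<and>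
            map (metallic_code p) S = map (\<lambda>h. w @ [h + 1]) [1..<p-4] @ [u @ [0], u @ [1]])
       \<and> (is_white p (penultimate p) \<nu> \<longrightarrow>
            signature p \<nu> \<noteq> 0 \<and>
            map (metallic_code p) S = map (\<lambda>h. w @ [h + 1]) [1..<p-3] @ [u @ [0], u @ [1]])
       \<and> (\<forall>s\<in>set S. \<not> is_white p (penultimate p) s \<longleftrightarrow> metallic_code p s = u @ [0])
       \<and> map (signature p) S = [2..<length S] @ [0, 1]"
proof -
  have p5: "5 \<le> p" using assms(1) .
  have n1: "\<nu> \<ge> 1" using assms(2) .
  let ?ns = "nsf p u"
  let ?a = "TT p (\<nu> - 1)"
  have TS: "TT p \<nu> = ?a + ?ns" using T_step[OF p5 n1] by (simp add: u_def)
  have S: "S = [?a + 1..<?a + 1 + ?ns]"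
    unfolding S_def sons_def len_tree[OF p5] TS by (simp add: add_ac)
  have wh: "is_white p (penultimate p) \<nu> \<longleftrightarrow> last u \<noteq> 0" using white[OF p5 n1] by (simp add: u_def)
  have ns2: "?ns \<ge> 2" using nsf_ge[OF p5] by blast
  then obtain m where m: "?ns = Suc (Suc m)" using le_Suc_ex[OF ns2] by auto
  have lenS: "length S = ?ns" using S by simp
  have mapS1: "map (metallic_code p) S = map (son p u w) [1..<?ns + 1]"
  proof (rule nth_equalityI)
    show "length (map (metallic_code p) S) = length (map (son p u w) [1..<?ns + 1])" using lenS by simp
  next
    fix i assume "i < length (map (metallic_code p) S)"
    then have i: "i < ?ns" using lenS by simp
    have Si: "S ! i = ?a + (1 + i)" using S i by (simp add: nth_upt del: upt_Suc)
    have "metallic_code p (?a + (1 + i)) = son p u w (1 + i)"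
      using son_code[OF p5 n1, of "1 + i"] i by (simp add: u_def w_def)
    then show "map (metallic_code p) S ! i = map (son p u w) [1..<?ns + 1] ! i"
      using i Si lenS by (simp add: nth_upt del: upt_Suc)
  qed
  have up: "[1..<?ns+1] = [1..<m+1] @ [m+1, m+2]" using m by simp
  have s1: "son p u w (m+1) = u @ [0]" "son p u w (m+2) = u @ [1]" using m unfolding son_def[OF p5] by simp_all
  have s2: "map (son p u w) [1..<m+1] = map (\<lambda>h. w @ [h+1]) [1..<m+1]"
    by (rule map_cong) (use m in \<open>auto simp: son_def[OF p5]\<close>)
  have mapS: "map (metallic_code p) S = map (\<lambda>h. w @ [h+1]) [1..<?ns - 1] @ [u @ [0], u @ [1]]"
  proof -
    have "map (metallic_code p) S = map (son p u w) [1..<m+1] @ [son p u w (m+1), son p u w (m+2)]"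
      unfolding mapS1 up by simp
    also have "\<dots> = map (\<lambda>h. w @ [h+1]) [1..<?ns - 1] @ [u @ [0], u @ [1]]"
      unfolding s1 s2 using m by simp
    finally show ?thesis .
  qed
  have sig: "map (signature p) S = [2..<length S] @ [0, 1]"
  proof -
    have "map (signature p) S = map last (map (metallic_code p) S)"
      by (simp add: signature_def comp_def)
    also have "\<dots> = map (\<lambda>h. h + 1) [1..<m+1] @ [0, 1]" unfolding mapS using m by (simp add: comp_def)
    also have "\<dots> = [2..<length S] @ [0, 1]"
    proof -
      have "map (\<lambda>h. h + 1) [1..<m+1] = map Suc [1..<m+1]" by simp
      also have "\<dots> = [2..<m+2]" by (simp only: map_Suc_upt) (simp add: numeral_2_eq_2 del: upt_Suc)
      finally show ?thesis using lenS m by simp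
    qed
    finally show ?thesis .
  qed
  have col: "\<forall>s\<in>set S. \<not> is_white p (penultimate p) s \<longleftrightarrow> metallic_code p s = u @ [0]"
  proof
    fix s assume sS: "s \<in> set S"
    then have s1: "s \<ge> 1" using S by (simp del: upt_Suc)
    have "metallic_code p s \<in> set (map (metallic_code p) S)" using sS by simp
    then have "metallic_code p s \<in> set (map (\<lambda>h. w @ [h+1]) [1..<?ns - 1]) \<or> metallic_code p s = u @ [0]
               \<or> metallic_code p s = u @ [1]" unfolding mapS by auto
    then have "last (metallic_code p s) = 0 \<longleftrightarrow> metallic_code p s = u @ [0]" by auto
    then show "\<not> is_white p (penultimate p) s \<longleftrightarrow> metallic_code p s = u @ [0]"
      using white[OF p5 s1] by simp
  qed
  have sg\<nu>: "signature p \<nu> = last u" by (simp add: signature_def u_def)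
  show ?thesis
  proof (intro conjI impI)
    assume "\<not> is_white p (penultimate p) \<nu>"
    then have l: "last u = 0" using wh by simp
    then show "signature p \<nu> = 0" using sg\<nu> by simp
    have "?ns - 1 = p - 4" using l p5 by (simp add: nsf_def[OF p5])
    then show "map (metallic_code p) S = map (\<lambda>h. w @ [h + 1]) [1..<p-4] @ [u @ [0], u @ [1]]"
      using mapS by simp
  next
    assume "is_white p (penultimate p) \<nu>"
    then have l: "last u \<noteq> 0" using wh by simp
    then show "signature p \<nu> \<noteq> 0" using sg\<nu> by simp
    have "?ns - 1 = p - 3" using l p5 by (simp add: nsf_def[OF p5])
    then show "map (metallic_code p) S = map (\<lambda>h. w @ [h + 1]) [1..<p-3] @ [u @ [0], u @ [1]]"
      using mapS by simp
  qed (use col sig in auto)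
qed

end
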